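(* Let $G=(V,E)$ be a $3$-regular graph. Then there exists a polynomial $P(\cdot,\cdot)$ in two variables with integer coefficients such that for all $a,b\in\mathbb{C}$, $$\sum_{\sigma:V\to\{0,1\}}\prod_{\{u,v\}\in E} g_{a,b}(\sigma(u),\sigma(v)) = P(ab,\,a^3+b^3),$$ where $g_{a,b}(0,0)=a$, $g_{a,b}(0,1)=g_{a,b}(1,0)=1$, $g_{a,b}(1,1)=b$. *)

theory Defs
  imports Complex_Main "HOL-Library.FuncSet"
begin

definition three_regular_graph :: "'v set \<Rightarrow> 'v set set \<Rightarrow> bool" where
  "three_regular_graph V E \<longleftrightarrow>
     finite V \<and> (\<forall>e\<in>E. e \<subseteq> V \<and> card e = 2) \<and> (\<forall>v\<in>V. card {e\<in>E. v \<in> e} = 3)"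

definition gab :: "complex \<Rightarrow> complex \<Rightarrow> nat \<Rightarrow> nat \<Rightarrow> complex" where
  "gab a b i j = (if i = 0 \<and> j = 0 then a else if i = 1 \<and> j = 1 then b else 1)"

text \<open>The two endpoints of an edge e = {u,v} (g is symmetric, so the order is irrelevant).\<close>
definition end1 :: "'v set \<Rightarrow> 'v" where "end1 e = (SOME u. u \<in> e)"
definition end2 :: "'v set \<Rightarrow> 'v" where "end2 e = (SOME v. v \<in> e \<and> v \<noteq> end1 e)"

definition partition_fn :: "'v set \<Rightarrow> 'v set set \<Rightarrow> complex \<Rightarrow> complex \<Rightarrow> complex" where
  "partition_fn V E a b =
     (\<Sum>\<sigma> \<in> V \<rightarrow>\<^sub>E {0::nat, 1}. \<Prod>e\<in>E. gab a b (\<sigma> (end1 e)) (\<sigma> (end2 e)))"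

end

theory Submission
  imports Defs
begin


definition lp :: "(int \<times> nat \<times> nat) list \<Rightarrow> complex \<Rightarrow> complex \<Rightarrow> complex" where
  "lp L x y = sum_list (map (\<lambda>(c,i,j). of_int c * x^i * y^j) L)"

lemma lp_Nil[simp]: "lp [] x y = 0" by (simp add: lp_def)
lemma lp_Cons[simp]: "lp ((c,i,j)#L) x y = of_int c * x^i * y^j + lp L x y" by (simp add: lp_def)
lemma lp_append[simp]: "lp (L1 @ L2) x y = lp L1 x y + lp L2 x y" by (simp add: lp_def)

definition lmul :: "(int \<times> nat \<times> nat) list \<Rightarrow> (int \<times> nat \<times> nat) list \<Rightarrow> (int \<times> nat \<times> nat) list" where
  "lmul L1 L2 = concat (map (\<lambda>(c1,i1,j1). map (\<lambda>(c2,i2,j2). (c1*c2, i1+i2, j1+j2)) L2) L1)"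

lemma lp_mul1: "lp (map (\<lambda>(c2,i2,j2). (c1*c2, i1+i2, j1+j2)) L2) x y = of_int c1 * x^i1 * y^j1 * lp L2 x y"
  by (induction L2) (auto simp: algebra_simps power_add)

lemma lp_lmul: "lp (lmul L1 L2) x y = lp L1 x y * lp L2 x y"
  by (induction L1) (auto simp: lmul_def lp_mul1 algebra_simps)

lemma lp_neg: "lp (map (\<lambda>(c,i,j). (-c,i,j)) L) x y = - lp L x y"
  by (induction L) auto

definition rep :: "(complex \<Rightarrow> complex \<Rightarrow> complex) \<Rightarrow> bool" where
  "rep f \<longleftrightarrow> (\<exists>L. \<forall>a b. f a b = lp L (a*b) (a^3+b^3))"

lemma rep_add: "rep f \<Longrightarrow> rep g \<Longrightarrow> rep (\<lambda>a b. f a b + g a b)"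
  unfolding rep_def by (metis lp_append)
lemma rep_mult: "rep f \<Longrightarrow> rep g \<Longrightarrow> rep (\<lambda>a b. f a b * g a b)"
  unfolding rep_def by (metis lp_lmul)
lemma rep_neg: "rep f \<Longrightarrow> rep (\<lambda>a b. - f a b)"
  unfolding rep_def by (metis lp_neg)
lemma rep_diff: "rep f \<Longrightarrow> rep g \<Longrightarrow> rep (\<lambda>a b. f a b - g a b)"
  using rep_add[OF _ rep_neg[of g]] by simp
lemma rep_const: "rep (\<lambda>a b. of_int k)"
  unfolding rep_def by (rule exI[of _ "[(k,0,0)]"]) simp
lemma rep_zero: "rep (\<lambda>a b. 0)"
  using rep_const[of 0] by simp
lemma rep_one: "rep (\<lambda>a b. 1)"
  using rep_const[of 1] by simp
lemma rep_ab: "rep (\<lambda>a b. a*b)"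
  unfolding rep_def by (rule exI[of _ "[(1,1,0)]"]) simp
lemma rep_s: "rep (\<lambda>a b. a^3+b^3)"
  unfolding rep_def by (rule exI[of _ "[(1,0,1)]"]) simp
lemma rep_pow: "rep f \<Longrightarrow> rep (\<lambda>a b. f a b ^ n)"
  by (induction n) (auto intro: rep_one rep_mult[of f "\<lambda>a b. f a b ^ _", simplified])

lemma rep_sum: "finite A \<Longrightarrow> (\<And>x. x \<in> A \<Longrightarrow> rep (f x)) \<Longrightarrow> rep (\<lambda>a b. \<Sum>x\<in>A. f x a b)"
  by (induction A rule: finite_induct) (auto intro: rep_zero rep_add[of "f _" "\<lambda>a b. \<Sum>x\<in>_. f x a b", simplified])

lemma rep_h: "rep (\<lambda>a b. a^(3*d) + b^(3*d))"
proof (induction d rule: less_induct)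
  case (less d)
  show ?case
  proof (cases "d \<le> 1")
    case True
    then have "d = 0 \<or> d = 1" by auto
    then show ?thesis
    proof
      assume "d = 0" then show ?thesis using rep_const[of 2] by simp
    next
      assume "d = 1" then show ?thesis using rep_s by simp
    qed
  next
    case False
    then obtain m where m: "d = m + 2" by (metis add.commute le_Suc_ex not_le Suc_1 Suc_leI)
    have r: "rep (\<lambda>a b. (a^3+b^3) * (a^(3*(m+1)) + b^(3*(m+1))) - (a*b)^3 * (a^(3*m) + b^(3*m)))"
      by (intro rep_diff rep_mult rep_s rep_pow rep_ab less) (auto simp: m)
    have "\<And>a b::complex. (a^3+b^3) * (a^(3*(m+1)) + b^(3*(m+1))) - (a*b)^3 * (a^(3*m) + b^(3*m))
       = a^(3*d) + b^(3*d)"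
      by (simp add: m algebra_simps power_add power_mult_distrib)
    with r show ?thesis by simp
  qed
qed

lemma rep_term: assumes "(3::int) dvd (int p - int q)"
  shows "rep (\<lambda>a b. a^p*b^q + a^q*b^p)"
proof -
  have main: "rep (\<lambda>a b. a^p*b^q + a^q*b^p)" if qp: "q \<le> p" and d3: "(3::int) dvd (int p - int q)" for p q
  proof -
    obtain k where k: "int p - int q = 3 * k" using d3 by blast
    have "k \<ge> 0" using k qp by linarith
    define d where "d = nat k"
    have pd: "p = q + 3*d" using k \<open>k \<ge> 0\<close> d_def by linarith
    have "rep (\<lambda>a b. (a*b)^q * (a^(3*d) + b^(3*d)))"
      by (intro rep_mult rep_pow rep_ab rep_h)
    moreover have "\<And>a b::complex. (a*b)^q * (a^(3*d) + b^(3*d)) = a^p*b^q + a^q*b^p"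
      by (simp add: pd algebra_simps power_add power_mult_distrib)
    ultimately show ?thesis by simp
  qed
  show ?thesis
  proof (cases "q \<le> p")
    case True then show ?thesis using main assms by blast
  next
    case False
    have "(3::int) dvd (int q - int p)" using assms by (metis dvd_minus_iff minus_diff_eq)
    then have "rep (\<lambda>a b. a^q*b^p + a^p*b^q)" using main False by simp
    then show ?thesis by (simp add: add.commute)
  qed
qed

definition cf :: "(int \<times> nat \<times> nat) list \<Rightarrow> nat \<Rightarrow> nat \<Rightarrow> int" where
  "cf L i j = sum_list (map (\<lambda>(c,i',j'). if i' = i \<and> j' = j then c else 0) L)"

lemma cf_Nil[simp]: "cf [] i j = 0" by (simp add: cf_def)
lemma cf_Cons[simp]: "cf ((c,i0,j0)#L) i j = (if i0 = i \<and> j0 = j then c else 0) + cf L i j"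
  by (simp add: cf_def)

lemma delta2: assumes "i0 \<le> N" "j0 \<le> N"
  shows "(\<Sum>i\<le>N. \<Sum>j\<le>N. of_int (if i0 = i \<and> j0 = j then c else 0) * x^i * (y::complex)^j) = of_int c * x^i0 * y^j0"
proof -
  have "(\<Sum>i\<le>N. \<Sum>j\<le>N. of_int (if i0 = i \<and> j0 = j then c else 0) * x^i * y^j)
      = (\<Sum>i\<le>N. if i = i0 then of_int c * x^i0 * y^j0 else 0)"
  proof (rule sum.cong[OF refl])
    fix i assume "i \<in> {..N}"
    show "(\<Sum>j\<le>N. of_int (if i0 = i \<and> j0 = j then c else 0) * x^i * y^j) = (if i = i0 then of_int c * x^i0 * y^j0 else 0)"
    proof (cases "i = i0")
      case True
      have "(\<Sum>j\<le>N. of_int (if i0 = i \<and> j0 = j then c else 0) * x^i * y^j) = (\<Sum>j\<le>N. if j = j0 then of_int c * x^i0 * y^j0 else 0)"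
        by (rule sum.cong[OF refl]) (auto simp: True)
      also have "\<dots> = of_int c * x^i0 * y^j0" using assms(2) by (simp only: sum.delta finite_atMost) simp
      finally show ?thesis using True by simp
    qed auto
  qed
  also have "\<dots> = of_int c * x^i0 * y^j0" using assms(1) by (simp only: sum.delta finite_atMost) simp
  finally show ?thesis .
qed

lemma lp_to_sum: "(\<forall>t\<in>set L. fst (snd t) \<le> N \<and> snd (snd t) \<le> N) \<Longrightarrow>
  lp L x y = (\<Sum>i\<le>N. \<Sum>j\<le>N. of_int (cf L i j) * x^i * y^j)"
proof (induction L)
  case Nil then show ?case by simp
next
  case (Cons t L)
  obtain c i0 j0 where t: "t = (c,i0,j0)" by (cases t) auto
  have b: "i0 \<le> N" "j0 \<le> N" using Cons.prems t by auto
  have IH: "lp L x y = (\<Sum>i\<le>N. \<Sum>j\<le>N. of_int (cf L i j) * x^i * y^j)" using Cons by simp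
  have "(\<Sum>i\<le>N. \<Sum>j\<le>N. of_int (cf (t#L) i j) * x^i * y^j)
     = (\<Sum>i\<le>N. \<Sum>j\<le>N. of_int (if i0 = i \<and> j0 = j then c else 0) * x^i * y^j + of_int (cf L i j) * x^i * y^j)"
    unfolding t cf_Cons of_int_add distrib_right ..
  also have "\<dots> = (\<Sum>i\<le>N. \<Sum>j\<le>N. of_int (if i0 = i \<and> j0 = j then c else 0) * x^i * y^j) + (\<Sum>i\<le>N. \<Sum>j\<le>N. of_int (cf L i j) * x^i * y^j)"
    by (simp only: sum.distrib)
  also have "\<dots> = lp (t#L) x y" unfolding delta2[OF b] IH t lp_Cons ..
  finally show ?case by simp
qed

lemma rep_final: "rep f \<Longrightarrow> \<exists>(N::nat) (c :: nat \<Rightarrow> nat \<Rightarrow> int). \<forall>a b :: complex.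
           f a b = (\<Sum>i\<le>N. \<Sum>j\<le>N. of_int (c i j) * (a * b) ^ i * (a ^ 3 + b ^ 3) ^ j)"
proof -
  assume "rep f"
  then obtain L where L: "\<And>a b. f a b = lp L (a*b) (a^3+b^3)" unfolding rep_def by blast
  define N where "N = sum_list (map (\<lambda>t. fst (snd t) + snd (snd t)) L)"
  have "\<forall>t\<in>set L. fst (snd t) \<le> N \<and> snd (snd t) \<le> N"
  proof
    fix t assume "t \<in> set L"
    then have "fst (snd t) + snd (snd t) \<le> N" unfolding N_def
      using member_le_sum_list[of "fst (snd t) + snd (snd t)" "map (\<lambda>t. fst (snd t) + snd (snd t)) L"] by auto
    then show "fst (snd t) \<le> N \<and> snd (snd t) \<le> N" by auto
  qed
  then have "\<And>a b. f a b = (\<Sum>i\<le>N. \<Sum>j\<le>N. of_int (cf L i j) * (a*b)^i * (a^3+b^3)^j)"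
    using L lp_to_sum[OF \<open>\<forall>t\<in>set L. _\<close>] by simp
  then show ?thesis by blast
qed

lemma ends:
  assumes "card e = 2"
  shows "end1 e \<in> e \<and> end2 e \<in> e \<and> end1 e \<noteq> end2 e \<and> e = {end1 e, end2 e}"
proof -
  obtain u w where e: "e = {u,w}" "u \<noteq> w" using card_2_iff[THEN iffD1, OF assms] by blast
  have uw: "u \<in> e" "w \<in> e" "finite e" using e(1) by auto
  have 1: "end1 e \<in> e" unfolding end1_def by (rule someI[of _ u]) (rule uw(1))
  have ex: "\<exists>v. v \<in> e \<and> v \<noteq> end1 e"
  proof (cases "end1 e = u")
    case True then show ?thesis using uw e(2) by blast
  next
    case False then show ?thesis using uw by blast
  qed
  have 2: "end2 e \<in> e \<and> end2 e \<noteq> end1 e" unfolding end2_def by (rule someI_ex[OF ex])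
  have eq: "{end1 e, end2 e} = e"
  proof (rule card_subset_eq)
    show "finite e" by (rule uw(3))
    show "{end1 e, end2 e} \<subseteq> e" using 1 2 by blast
    have "card {end1 e, end2 e} = 2" unfolding card_2_iff using 2 by blast
    then show "card {end1 e, end2 e} = card e" unfolding assms .
  qed
  show ?thesis
    by (intro conjI) (rule 1, rule conjunct1[OF 2], rule not_sym[OF conjunct2[OF 2]], rule sym[OF eq])
qed

lemma ball_pair: "e = {x,y} \<Longrightarrow> (\<forall>v\<in>e. P v) \<longleftrightarrow> P x \<and> P y" by simp

lemma prod_if_pow: "finite A \<Longrightarrow> (\<Prod>e\<in>A. if R e then (a::complex) else 1) = a ^ card {e\<in>A. R e}"
  by (simp add: prod.inter_filter[symmetric])

lemma sum_if_card: "finite A \<Longrightarrow> (\<Sum>e\<in>A. if R e then (1::int) else 0) = int (card {e\<in>A. R e})"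
  by (simp add: sum.inter_filter[symmetric])

theorem lemma4p1:
  fixes V :: "'v set" and E :: "'v set set"
  assumes "three_regular_graph V E"
  shows "\<exists>(N::nat) (c :: nat \<Rightarrow> nat \<Rightarrow> int). \<forall>a b :: complex.
           partition_fn V E a b =
           (\<Sum>i\<le>N. \<Sum>j\<le>N. of_int (c i j) * (a * b) ^ i * (a ^ 3 + b ^ 3) ^ j)"
proof -
  have finV: "finite V" and Esub: "\<And>e. e \<in> E \<Longrightarrow> e \<subseteq> V" and Ecard: "\<And>e. e \<in> E \<Longrightarrow> card e = 2"
    and deg: "\<And>v. v \<in> V \<Longrightarrow> card {e\<in>E. v \<in> e} = 3"
    using assms unfolding three_regular_graph_def by auto
  have finE: "finite E"
    by (rule finite_subset[of E "Pow V"]) (use Esub finV in auto)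
  define S where "S = V \<rightarrow>\<^sub>E {0::nat, 1}"
  have finS: "finite S" unfolding S_def using finV by (simp add: finite_PiE)
  define P where "P \<sigma> = card {e\<in>E. \<forall>v\<in>e. \<sigma> v = (0::nat)}" for \<sigma>
  define Q where "Q \<sigma> = card {e\<in>E. \<forall>v\<in>e. \<sigma> v = (1::nat)}" for \<sigma>
  have Sval: "\<sigma> v = 0 \<or> \<sigma> v = 1" if "\<sigma> \<in> S" "v \<in> V" for \<sigma> v
    using that unfolding S_def by auto
  have T: "(\<Prod>e\<in>E. gab a b (\<sigma> (end1 e)) (\<sigma> (end2 e))) = a ^ P \<sigma> * b ^ Q \<sigma>"
    if "\<sigma> \<in> S" for \<sigma> a b
  proof -
    have "(\<Prod>e\<in>E. gab a b (\<sigma> (end1 e)) (\<sigma> (end2 e)))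
        = (\<Prod>e\<in>E. (if \<forall>v\<in>e. \<sigma> v = 0 then a else 1) * (if \<forall>v\<in>e. \<sigma> v = 1 then b else 1))"
    proof (rule prod.cong[OF refl])
      fix e assume e: "e \<in> E"
      have eq: "e = {end1 e, end2 e}" using ends[OF Ecard[OF e]] by (elim conjE)
      have a0: "(\<forall>v\<in>e. \<sigma> v = 0) \<longleftrightarrow> \<sigma> (end1 e) = 0 \<and> \<sigma> (end2 e) = 0"
        by (rule ball_pair[OF eq])
      have a1: "(\<forall>v\<in>e. \<sigma> v = 1) \<longleftrightarrow> \<sigma> (end1 e) = 1 \<and> \<sigma> (end2 e) = 1"
        by (rule ball_pair[OF eq])
      show "gab a b (\<sigma> (end1 e)) (\<sigma> (end2 e)) = (if \<forall>v\<in>e. \<sigma> v = 0 then a else 1) * (if \<forall>v\<in>e. \<sigma> v = 1 then b else 1)"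
        unfolding a0 a1 gab_def by auto
    qed
    also have "\<dots> = a ^ P \<sigma> * b ^ Q \<sigma>"
      by (simp add: prod.distrib prod_if_pow finE P_def Q_def)
    finally show ?thesis .
  qed
  have dvd3: "(3::int) dvd (int (P \<sigma>) - int (Q \<sigma>))" if s: "\<sigma> \<in> S" for \<sigma>
  proof -
    define w where "w v = (if \<sigma> v = 0 then 1 else (-1::int))" for v
    have "(\<Sum>e\<in>E. \<Sum>v\<in>e. w v) = (\<Sum>e\<in>E. 2 * (if \<forall>v\<in>e. \<sigma> v = 0 then 1 else 0) - 2 * (if \<forall>v\<in>e. \<sigma> v = 1 then 1 else 0))"
    proof (rule sum.cong[OF refl])
      fix e assume e: "e \<in> E"
      obtain x y where xy: "e = {x,y}" "x \<noteq> y" using card_2_iff[THEN iffD1, OF Ecard[OF e]] by blast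
      have "x \<in> V" "y \<in> V" using Esub e xy by auto
      then have "\<sigma> x = 0 \<or> \<sigma> x = 1" "\<sigma> y = 0 \<or> \<sigma> y = 1" using Sval s by auto
      then show "(\<Sum>v\<in>e. w v) = 2 * (if \<forall>v\<in>e. \<sigma> v = 0 then 1 else 0) - 2 * (if \<forall>v\<in>e. \<sigma> v = 1 then 1 else 0)"
        using xy by (simp add: w_def) (elim disjE; simp)
    qed
    also have "\<dots> = 2 * (int (P \<sigma>) - int (Q \<sigma>))"
      by (simp only: sum_subtractf sum_distrib_left[symmetric] sum_if_card[OF finE]) (simp add: P_def Q_def)
    finally have A: "(\<Sum>e\<in>E. \<Sum>v\<in>e. w v) = 2 * (int (P \<sigma>) - int (Q \<sigma>))" .
    have "(\<Sum>e\<in>E. \<Sum>v\<in>e. w v) = (\<Sum>e\<in>E. \<Sum>v\<in>V. if v \<in> e then w v else 0)"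
    proof (rule sum.cong[OF refl])
      fix e assume "e \<in> E"
      then have "{v\<in>V. v \<in> e} = e" using Esub by auto
      then show "(\<Sum>v\<in>e. w v) = (\<Sum>v\<in>V. if v \<in> e then w v else 0)"
        using sum.inter_filter[OF finV, of w "\<lambda>v. v \<in> e"] by simp
    qed
    also have "\<dots> = (\<Sum>v\<in>V. \<Sum>e\<in>E. if v \<in> e then w v else 0)" by (rule sum.swap)
    also have "\<dots> = (\<Sum>v\<in>V. 3 * w v)"
    proof (rule sum.cong[OF refl])
      fix v assume v: "v \<in> V"
      have "(\<Sum>e\<in>E. if v \<in> e then w v else 0) = (\<Sum>e\<in>{e\<in>E. v \<in> e}. w v)"
        using sum.inter_filter[OF finE, of "\<lambda>_. w v" "\<lambda>e. v \<in> e"] by simp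
      also have "\<dots> = 3 * w v" using deg[OF v] by simp
      finally show "(\<Sum>e\<in>E. if v \<in> e then w v else 0) = 3 * w v" .
    qed
    also have "\<dots> = 3 * (\<Sum>v\<in>V. w v)" by (simp add: sum_distrib_left)
    finally have "2 * (int (P \<sigma>) - int (Q \<sigma>)) = 3 * (\<Sum>v\<in>V. w v)" using A by simp
    then show ?thesis by presburger
  qed
  define comp where "comp \<sigma> = (\<lambda>v. if v \<in> V then 1 - \<sigma> v else undefined)" for \<sigma> :: "'v \<Rightarrow> nat"
  have compS: "comp \<sigma> \<in> S" if "\<sigma> \<in> S" for \<sigma>
    using that unfolding S_def comp_def by (auto simp: PiE_iff extensional_def)
  have compcomp: "comp (comp \<sigma>) = \<sigma>" if "\<sigma> \<in> S" for \<sigma>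
  proof
    fix v show "comp (comp \<sigma>) v = \<sigma> v"
      using that Sval[OF that, of v] unfolding S_def comp_def by (auto simp: PiE_iff extensional_def)
  qed
  have PQcomp: "P (comp \<sigma>) = Q \<sigma> \<and> Q (comp \<sigma>) = P \<sigma>" if s: "\<sigma> \<in> S" for \<sigma>
  proof -
    have ce: "\<forall>v\<in>e. comp \<sigma> v = 1 - \<sigma> v \<and> (\<sigma> v = 0 \<or> \<sigma> v = 1)" if e: "e \<in> E" for e
    proof
      fix v assume "v \<in> e"
      then have "v \<in> V" using Esub[OF e] by blast
      then show "comp \<sigma> v = 1 - \<sigma> v \<and> (\<sigma> v = 0 \<or> \<sigma> v = 1)" using Sval[OF s] unfolding comp_def by simp
    qed
    have c0: "(\<forall>v\<in>e. comp \<sigma> v = 0) \<longleftrightarrow> (\<forall>v\<in>e. \<sigma> v = 1)" if "e \<in> E" for e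
      using ce[OF that] by fastforce
    have c1: "(\<forall>v\<in>e. comp \<sigma> v = 1) \<longleftrightarrow> (\<forall>v\<in>e. \<sigma> v = 0)" if "e \<in> E" for e
      using ce[OF that] by fastforce
    have "{e\<in>E. \<forall>v\<in>e. comp \<sigma> v = 0} = {e\<in>E. \<forall>v\<in>e. \<sigma> v = 1}" using c0 by blast
    moreover have "{e\<in>E. \<forall>v\<in>e. comp \<sigma> v = 1} = {e\<in>E. \<forall>v\<in>e. \<sigma> v = 0}" using c1 by blast
    ultimately show ?thesis unfolding P_def Q_def by simp
  qed
  have Z: "partition_fn V E a b = (\<Sum>\<sigma>\<in>S. a ^ P \<sigma> * b ^ Q \<sigma>)" for a b
    unfolding partition_fn_def S_def[symmetric] using T by (simp cong: sum.cong)
  show ?thesis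
  proof (cases "V = {}")
    case True
    then have "S = {\<lambda>x. undefined}" unfolding S_def by simp
    moreover have "E = {}" using True Esub Ecard by fastforce
    ultimately have "partition_fn V E a b = 1" for a b
      unfolding Z P_def Q_def by simp
    then have "partition_fn V E = (\<lambda>a b. 1)" by (intro ext)
    then have "rep (partition_fn V E)" using rep_one by simp
    then show ?thesis by (rule rep_final)
  next
    case False
    then obtain v0 where v0: "v0 \<in> V" by blast
    define S0 where "S0 = {\<sigma>\<in>S. \<sigma> v0 = 0}"
    define S1 where "S1 = {\<sigma>\<in>S. \<sigma> v0 = 1}"
    have SU: "S = S0 \<union> S1" using Sval v0 unfolding S0_def S1_def by auto
    have fin01: "finite S0" "finite S1" using finS unfolding S0_def S1_def by auto
    have dis: "S0 \<inter> S1 = {}" unfolding S0_def S1_def by auto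
    have Zeq: "partition_fn V E a b = (\<Sum>\<sigma>\<in>S0. a ^ P \<sigma> * b ^ Q \<sigma> + a ^ Q \<sigma> * b ^ P \<sigma>)" for a b
    proof -
      have "(\<Sum>\<sigma>\<in>S1. a ^ P \<sigma> * b ^ Q \<sigma>) = (\<Sum>\<sigma>\<in>S0. a ^ Q \<sigma> * b ^ P \<sigma>)"
      proof (rule sum.reindex_bij_witness[of _ comp comp])
        fix \<sigma> assume "\<sigma> \<in> S1"
        then show "comp (comp \<sigma>) = \<sigma>" "comp \<sigma> \<in> S0" "a ^ Q (comp \<sigma>) * b ^ P (comp \<sigma>) = a ^ P \<sigma> * b ^ Q \<sigma>"
          using compcomp compS PQcomp v0 unfolding S0_def S1_def by (auto simp: comp_def)
      next
        fix \<sigma> assume "\<sigma> \<in> S0"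
        then show "comp (comp \<sigma>) = \<sigma>" "comp \<sigma> \<in> S1"
          using compcomp compS v0 unfolding S0_def S1_def by (auto simp: comp_def)
      qed
      then show ?thesis unfolding Z SU sum.union_disjoint[OF fin01 dis] by (simp add: sum.distrib)
    qed
    moreover have "rep (\<lambda>a b. \<Sum>\<sigma>\<in>S0. a ^ P \<sigma> * b ^ Q \<sigma> + a ^ Q \<sigma> * b ^ P \<sigma>)"
      by (rule rep_sum[OF fin01(1)]) (rule rep_term, use dvd3 S0_def in auto)
    moreover have "partition_fn V E = (\<lambda>a b. \<Sum>\<sigma>\<in>S0. a ^ P \<sigma> * b ^ Q \<sigma> + a ^ Q \<sigma> * b ^ P \<sigma>)"
      by (intro ext) (rule Zeq)
    ultimately have "rep (partition_fn V E)" by simp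
    then show ?thesis by (rule rep_final)
  qed
qed


end
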